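(* Let $U$ be an open subset of $\mathbb{H}\cong\mathbb{C}^2$. The set $\mathcal{H}_{\mathbb{R}}$ of almost everywhere defined hyperholomorphic functions $f=f_1+f_2\mathbf{j}$ on $U$ whose components $f_1,f_2$ are real valued is a right algebra over $\mathbb{R}$ (with respect to pointwise addition and pointwise quaternionic multiplication).
   Context: Quaternions are written $q=z_1+z_2\mathbf{j}$ with $z_1,z_2\in\mathbb{C}$, where $\mathbf{j}^2=-1$ and $z\mathbf{j}=\mathbf{j}\overline z$ for $z\in\mathbb{C}$. A smooth function $f:U\to\mathbb{H}$ is written $f=f_1+f_2\mathbf{j}$ with $f_1,f_2$ complex valued (its components). The product of $f=f_1+f_2\mathbf{j}$ and $g=g_1+g_2\mathbf{j}$ is $f*g=f_1g_1-f_2\overline g_2+(f_1g_2+f_2\overline g_1)\mathbf{j}$. The modified Cauchy–Fueter operator is $\mathcal{D}f=\frac12\big(\frac{\partial f_1}{\partial\overline z_1}-\frac{\partial\overline f_2}{\partial z_2}\big)+\mathbf{j}\,\frac12\big(\frac{\partial f_1}{\partial\overline z_2}+\frac{\partial\overline f_2}{\partial z_1}\big)$, and $f$ is hyperholomorphic if $\mathcal{D}f=0$ where defined. An almost everywhere defined hyperholomorphic function is one defined and smooth on an open subset of $U$ of full measure, where it satisfies $\mathcal{D}f=0$. *)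

theory Defs
  imports "HOL-Analysis.Analysis"
begin

text \<open>Quaternions q = z1 + z2 j are represented by the pair (z1, z2) of complex numbers;
  H is identified with C^2 = complex \<times> complex (a Euclidean space, carrying Lebesgue measure).\<close>

type_synonym quat = "complex \<times> complex"

definition qmult :: "quat \<Rightarrow> quat \<Rightarrow> quat" where
  "qmult f g = (fst f * fst g - snd f * cnj (snd g), fst f * snd g + snd f * cnj (fst g))"

text \<open>Smoothness (C-infinity) on an open set: continuous, differentiable, and every
  directional derivative is again smooth (coinductively, i.e. derivatives of all orders).\<close>

coinductive smooth_on :: "'a::real_normed_vector set \<Rightarrow> ('a \<Rightarrow> 'b::real_normed_vector) \<Rightarrow> bool" where
  "\<lbrakk> open S; continuous_on S f; \<forall>x\<in>S. f differentiable (at x);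
     \<forall>v. smooth_on S (\<lambda>x. frechet_derivative f (at x) v) \<rbrakk> \<Longrightarrow> smooth_on S f"

text \<open>Real partial derivatives w.r.t. x1, y1, x2, y2 where z1 = x1 + i y1, z2 = x2 + i y2,
  and the Wirtinger derivatives.\<close>

definition dz1 :: "(complex \<times> complex \<Rightarrow> complex) \<Rightarrow> complex \<times> complex \<Rightarrow> complex" where
  "dz1 h p = (frechet_derivative h (at p) (1, 0) - \<i> * frechet_derivative h (at p) (\<i>, 0)) / 2"

definition dzbar1 :: "(complex \<times> complex \<Rightarrow> complex) \<Rightarrow> complex \<times> complex \<Rightarrow> complex" where
  "dzbar1 h p = (frechet_derivative h (at p) (1, 0) + \<i> * frechet_derivative h (at p) (\<i>, 0)) / 2"

definition dz2 :: "(complex \<times> complex \<Rightarrow> complex) \<Rightarrow> complex \<times> complex \<Rightarrow> complex" where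
  "dz2 h p = (frechet_derivative h (at p) (0, 1) - \<i> * frechet_derivative h (at p) (0, \<i>)) / 2"

definition dzbar2 :: "(complex \<times> complex \<Rightarrow> complex) \<Rightarrow> complex \<times> complex \<Rightarrow> complex" where
  "dzbar2 h p = (frechet_derivative h (at p) (0, 1) + \<i> * frechet_derivative h (at p) (0, \<i>)) / 2"

definition CF :: "(complex \<times> complex \<Rightarrow> quat) \<Rightarrow> complex \<times> complex \<Rightarrow> quat" where
  "CF f p =
     ((dzbar1 (\<lambda>q. fst (f q)) p - dz2 (\<lambda>q. cnj (snd (f q))) p) / 2,
      (dzbar2 (\<lambda>q. fst (f q)) p + dz1 (\<lambda>q. cnj (snd (f q))) p) / 2)"

definition ae_hyperholomorphic :: "(complex \<times> complex) set \<Rightarrow> (complex \<times> complex) set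
    \<Rightarrow> (complex \<times> complex \<Rightarrow> quat) \<Rightarrow> bool" where
  "ae_hyperholomorphic U V f \<longleftrightarrow>
     open V \<and> V \<subseteq> U \<and> negligible (U - V) \<and> smooth_on V f \<and> (\<forall>p\<in>V. CF f p = (0, 0))"

definition H_R :: "(complex \<times> complex) set \<Rightarrow> ((complex \<times> complex) set \<times> (complex \<times> complex \<Rightarrow> quat)) set" where
  "H_R U = {(V, f). ae_hyperholomorphic U V f \<and>
                    (\<forall>p\<in>V. fst (f p) \<in> \<real> \<and> snd (f p) \<in> \<real>)}"

end

theory Submission
  imports Defs
begin

lemma smooth_onD:
  assumes "smooth_on S f"
  shows "open S \<and> continuous_on S f \<and> (\<forall>x\<in>S. f differentiable (at x))
     \<and> (\<forall>v. smooth_on S (\<lambda>x. frechet_derivative f (at x) v))"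
  using assms by (rule smooth_on.cases) blast

lemma diff_cong:
  assumes o: "open S" and x: "x \<in> S" and d: "f differentiable (at x)"
    and e: "\<And>y. y \<in> S \<Longrightarrow> g y = f y"
  shows "g differentiable (at x) \<and> frechet_derivative g (at x) = frechet_derivative f (at x)"
proof -
  have fd: "(f has_derivative frechet_derivative f (at x)) (at x)"
    using d by (simp add: frechet_derivative_works)
  have "(g has_derivative frechet_derivative f (at x)) (at x)"
    by (rule has_derivative_transform_within_open[OF fd o x]) (simp add: e)
  then show ?thesis
    using frechet_derivative_at[of g] by (auto simp: differentiable_def)
qed

lemma smooth_on_cong:
  assumes "smooth_on S f" "\<And>x. x \<in> S \<Longrightarrow> g x = f x"
  shows "smooth_on S g"
proof (rule smooth_on.coinduct[where X="\<lambda>T h. T = S \<and> (\<exists>f. smooth_on S f \<and> (\<forall>x\<in>S. h x = f x))"])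
  show "S = S \<and> (\<exists>f. smooth_on S f \<and> (\<forall>x\<in>S. g x = f x))" using assms by blast
next
  fix T :: "'a set" and h :: "'a \<Rightarrow> 'b"
  assume "T = S \<and> (\<exists>f. smooth_on S f \<and> (\<forall>x\<in>S. h x = f x))"
  then obtain f where T: "T = S" and sf: "smooth_on S f" and e: "\<And>x. x \<in> S \<Longrightarrow> h x = f x"
    by blast
  from sf have o: "open S" and c: "continuous_on S f"
    and d: "\<forall>x\<in>S. f differentiable (at x)"
    and s: "\<forall>v. smooth_on S (\<lambda>x. frechet_derivative f (at x) v)"
    using smooth_onD by blast+
  have dg: "\<forall>x\<in>S. h differentiable (at x)"
    using diff_cong[of S _ f h] o e d by blast
  have fe: "\<And>x. x \<in> S \<Longrightarrow> frechet_derivative h (at x) = frechet_derivative f (at x)"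
    using diff_cong[of S _ f h] o e d by blast
  have cg: "continuous_on S h" using c e by (simp cong: continuous_on_cong)
  have X: "S = S \<and> (\<exists>f'. smooth_on S f' \<and> (\<forall>x\<in>S. frechet_derivative h (at x) v = f' x))" for v
  proof -
    have "\<forall>x\<in>S. frechet_derivative h (at x) v = frechet_derivative f (at x) v" using fe by simp
    then show ?thesis using s by blast
  qed
  show "\<exists>S' f'. T = S' \<and> h = f' \<and> open S' \<and> continuous_on S' f' \<and>
            (\<forall>x\<in>S'. f' differentiable at x) \<and>
            (\<forall>v. (S' = S \<and> (\<exists>f. smooth_on S f \<and> (\<forall>x\<in>S. frechet_derivative f' (at x) v = f x))) \<or>
                 smooth_on S' (\<lambda>x. frechet_derivative f' (at x) v))"
    apply (rule exI[of _ S], rule exI[of _ h])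
    using T o cg dg X by simp
qed

inductive GS for S :: "'a::real_normed_vector set" and B :: "'b::real_normed_vector \<Rightarrow> 'b \<Rightarrow> 'b" where
  base: "smooth_on S f \<Longrightarrow> GS S B f"
| add: "GS S B f \<Longrightarrow> GS S B g \<Longrightarrow> GS S B (\<lambda>x. f x + g x)"
| mul: "smooth_on S f \<Longrightarrow> smooth_on S g \<Longrightarrow> GS S B (\<lambda>x. B (f x) (g x))"
| cong: "GS S B f \<Longrightarrow> (\<And>x. x \<in> S \<Longrightarrow> g x = f x) \<Longrightarrow> GS S B g"

lemma GS_props:
  assumes bb: "bounded_bilinear B" and "GS S B h"
  shows "open S \<and> continuous_on S h \<and> (\<forall>x\<in>S. h differentiable (at x))
     \<and> (\<forall>v. GS S B (\<lambda>x. frechet_derivative h (at x) v))"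
  using assms(2)
proof induction
  case (base f)
  then show ?case using smooth_onD[OF base] GS.base by blast
next
  case (add f g)
  from add(3) have o: "open S" and cf: "continuous_on S f"
    and df: "\<forall>x\<in>S. f differentiable (at x)"
    and sf: "\<forall>v. GS S B (\<lambda>x. frechet_derivative f (at x) v)" by blast+
  from add(4) have cg: "continuous_on S g"
    and dg: "\<forall>x\<in>S. g differentiable (at x)"
    and sg: "\<forall>v. GS S B (\<lambda>x. frechet_derivative g (at x) v)" by blast+
  have hd: "((\<lambda>x. f x + g x) has_derivative
      (\<lambda>v. frechet_derivative f (at x) v + frechet_derivative g (at x) v)) (at x)" if "x \<in> S" for x
    using df dg that by (intro has_derivative_add) (auto simp: frechet_derivative_works)
  have fe: "frechet_derivative (\<lambda>x. f x + g x) (at x) v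
      = frechet_derivative f (at x) v + frechet_derivative g (at x) v" if "x \<in> S" for x v
    using fun_cong[OF frechet_derivative_at[OF hd[OF that]], of v] by simp
  have G: "GS S B (\<lambda>x. frechet_derivative (\<lambda>x. f x + g x) (at x) v)" for v
    by (rule GS.cong[OF GS.add[OF sf[rule_format] sg[rule_format]]]) (rule fe)
  have D: "\<forall>x\<in>S. (\<lambda>x. f x + g x) differentiable (at x)"
    using hd by (auto simp: differentiable_def)
  show ?case using o continuous_on_add[OF cf cg] D G by blast
next
  case (mul f g)
  from smooth_onD[OF mul(1)] have o: "open S" and cf: "continuous_on S f"
    and df: "\<forall>x\<in>S. f differentiable (at x)"
    and sf: "\<forall>v. smooth_on S (\<lambda>x. frechet_derivative f (at x) v)"
    by blast+
  from smooth_onD[OF mul(2)] have cg: "continuous_on S g"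
    and dg: "\<forall>x\<in>S. g differentiable (at x)"
    and sg: "\<forall>v. smooth_on S (\<lambda>x. frechet_derivative g (at x) v)"
    by blast+
  have hd: "((\<lambda>x. B (f x) (g x)) has_derivative
      (\<lambda>v. B (f x) (frechet_derivative g (at x) v) + B (frechet_derivative f (at x) v) (g x))) (at x)"
    if "x \<in> S" for x
    using df dg that by (intro bounded_bilinear.FDERIV[OF bb]) (auto simp: frechet_derivative_works)
  have fe: "frechet_derivative (\<lambda>x. B (f x) (g x)) (at x) v
      = B (f x) (frechet_derivative g (at x) v) + B (frechet_derivative f (at x) v) (g x)" if "x \<in> S" for x v
    using fun_cong[OF frechet_derivative_at[OF hd[OF that]], of v] by simp
  have G: "GS S B (\<lambda>x. frechet_derivative (\<lambda>x. B (f x) (g x)) (at x) v)" for v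
    by (rule GS.cong[OF GS.add[OF GS.mul[OF mul(1) sg[rule_format]] GS.mul[OF sf[rule_format] mul(2)]]])
       (rule fe)
  have D: "\<forall>x\<in>S. (\<lambda>x. B (f x) (g x)) differentiable (at x)"
    using hd by (auto simp: differentiable_def)
  show ?case using o bounded_bilinear.continuous_on[OF bb cf cg] D G by blast
next
  case (cong f g)
  from cong(3) have o: "open S" and cf: "continuous_on S f"
    and df: "\<forall>x\<in>S. f differentiable (at x)"
    and sf: "\<forall>v. GS S B (\<lambda>x. frechet_derivative f (at x) v)" by blast+
  have dg: "\<forall>x\<in>S. g differentiable (at x)"
    using diff_cong[of S _ f g] o df cong(2) by blast
  have fe: "\<And>x. x \<in> S \<Longrightarrow> frechet_derivative g (at x) = frechet_derivative f (at x)"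
    using diff_cong[of S _ f g] o df cong(2) by blast
  have cg: "continuous_on S g" using cf cong(2) by (simp cong: continuous_on_cong)
  have G: "GS S B (\<lambda>x. frechet_derivative g (at x) v)" for v
    by (rule GS.cong[OF sf[rule_format]]) (simp add: fe)
  show ?case using o cg dg G by blast
qed

lemma GS_smooth:
  assumes bb: "bounded_bilinear B" and h: "GS S B h"
  shows "smooth_on S h"
proof (rule smooth_on.coinduct[where X="\<lambda>T h. T = S \<and> GS S B h"])
  show "S = S \<and> GS S B h" using h by blast
next
  fix T k
  assume "T = S \<and> GS S B k"
  then have T: "T = S" and k: "GS S B k" by blast+
  from GS_props[OF bb k] have o: "open S" and c: "continuous_on S k"
    and d: "\<forall>x\<in>S. k differentiable (at x)"
    and G: "\<forall>v. GS S B (\<lambda>x. frechet_derivative k (at x) v)" by blast+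
  show "\<exists>S' f'. T = S' \<and> k = f' \<and> open S' \<and> continuous_on S' f' \<and>
            (\<forall>x\<in>S'. f' differentiable at x) \<and>
            (\<forall>v. (S' = S \<and> GS S B (\<lambda>x. frechet_derivative f' (at x) v)) \<or>
                 smooth_on S' (\<lambda>x. frechet_derivative f' (at x) v))"
    apply (rule exI[of _ S], rule exI[of _ k])
    using T o c d G by simp
qed

lemma CF_prod_core:
  assumes df: "(f has_derivative f') (at p)" and dg: "(g has_derivative g') (at p)"
    and rv: "Im (fst (f p)) = 0" "Im (snd (f p)) = 0" "Im (fst (g p)) = 0" "Im (snd (g p)) = 0"
    and rf: "\<And>v. Im (fst (f' v)) = 0 \<and> Im (snd (f' v)) = 0"
    and rg: "\<And>v. Im (fst (g' v)) = 0 \<and> Im (snd (g' v)) = 0"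
    and cf: "CF f p = (0,0)" and cg: "CF g p = (0,0)"
  shows "CF (\<lambda>q. qmult (f q) (g q)) p = (0,0)"
proof -
  have e1: "frechet_derivative (\<lambda>q. fst (f q)) (at p) = (\<lambda>v. fst (f' v))"
    by (rule frechet_derivative_at[symmetric]) (auto intro!: derivative_eq_intros df)
  have e2: "frechet_derivative (\<lambda>q. cnj (snd (f q))) (at p) = (\<lambda>v. cnj (snd (f' v)))"
    by (rule frechet_derivative_at[symmetric]) (auto intro!: derivative_eq_intros df)
  have e3: "frechet_derivative (\<lambda>q. fst (g q)) (at p) = (\<lambda>v. fst (g' v))"
    by (rule frechet_derivative_at[symmetric]) (auto intro!: derivative_eq_intros dg)
  have e4: "frechet_derivative (\<lambda>q. cnj (snd (g q))) (at p) = (\<lambda>v. cnj (snd (g' v)))"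
    by (rule frechet_derivative_at[symmetric]) (auto intro!: derivative_eq_intros dg)
  have e5: "frechet_derivative (\<lambda>q. fst (qmult (f q) (g q))) (at p) = (\<lambda>v.
     fst (f p) * fst (g' v) + fst (f' v) * fst (g p) - (snd (f p) * cnj (snd (g' v)) + snd (f' v) * cnj (snd (g p))))"
    unfolding qmult_def fst_conv
    by (rule frechet_derivative_at[symmetric]) (auto intro!: derivative_eq_intros df dg)
  have e6: "frechet_derivative (\<lambda>q. cnj (snd (qmult (f q) (g q)))) (at p) = (\<lambda>v.
     cnj (fst (f p) * snd (g' v) + fst (f' v) * snd (g p) + (snd (f p) * cnj (fst (g' v)) + snd (f' v) * cnj (fst (g p)))))"
    unfolding qmult_def snd_conv
    by (rule frechet_derivative_at[symmetric]) (auto intro!: derivative_eq_intros df dg)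
  note rr = rf[of "(1,0)"] rf[of "(\<i>,0)"] rf[of "(0,1)"] rf[of "(0,\<i>)"]
            rg[of "(1,0)"] rg[of "(\<i>,0)"] rg[of "(0,1)"] rg[of "(0,\<i>)"]
  from cf rv rr have C1:
    "Re (fst (f' (1,0))) = Re (snd (f' (0,1)))" "Re (fst (f' (\<i>,0))) = - Re (snd (f' (0,\<i>)))"
    "Re (fst (f' (0,1))) = - Re (snd (f' (1,0)))" "Re (fst (f' (0,\<i>))) = Re (snd (f' (\<i>,0)))"
    by (auto simp: CF_def dzbar1_def dz2_def dzbar2_def dz1_def e1 e2 complex_eq_iff)
  from cg rv rr have C2:
    "Re (fst (g' (1,0))) = Re (snd (g' (0,1)))" "Re (fst (g' (\<i>,0))) = - Re (snd (g' (0,\<i>)))"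
    "Re (fst (g' (0,1))) = - Re (snd (g' (1,0)))" "Re (fst (g' (0,\<i>))) = Re (snd (g' (\<i>,0)))"
    by (auto simp: CF_def dzbar1_def dz2_def dzbar2_def dz1_def e3 e4 complex_eq_iff)
  show ?thesis
    using rv rr C1 C2
    by (simp add: CF_def dzbar1_def dz2_def dzbar2_def dz1_def e5 e6 complex_eq_iff algebra_simps) (simp add: field_simps)
qed


lemma CF_add_core:
  assumes df: "(f has_derivative f') (at p)" and dg: "(g has_derivative g') (at p)"
    and cf: "CF f p = (0,0)" and cg: "CF g p = (0,0)"
  shows "CF (\<lambda>q. f q + g q) p = (0,0)"
proof -
  have e1: "frechet_derivative (\<lambda>q. fst (f q)) (at p) = (\<lambda>v. fst (f' v))"
    by (rule frechet_derivative_at[symmetric]) (auto intro!: derivative_eq_intros df)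
  have e2: "frechet_derivative (\<lambda>q. cnj (snd (f q))) (at p) = (\<lambda>v. cnj (snd (f' v)))"
    by (rule frechet_derivative_at[symmetric]) (auto intro!: derivative_eq_intros df)
  have e3: "frechet_derivative (\<lambda>q. fst (g q)) (at p) = (\<lambda>v. fst (g' v))"
    by (rule frechet_derivative_at[symmetric]) (auto intro!: derivative_eq_intros dg)
  have e4: "frechet_derivative (\<lambda>q. cnj (snd (g q))) (at p) = (\<lambda>v. cnj (snd (g' v)))"
    by (rule frechet_derivative_at[symmetric]) (auto intro!: derivative_eq_intros dg)
  have e5: "frechet_derivative (\<lambda>q. fst (f q) + fst (g q)) (at p) = (\<lambda>v. fst (f' v) + fst (g' v))"
    by (rule frechet_derivative_at[symmetric]) (auto intro!: derivative_eq_intros df dg)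
  have e6: "frechet_derivative (\<lambda>q. cnj (snd (f q)) + cnj (snd (g q))) (at p) = (\<lambda>v. cnj (snd (f' v)) + cnj (snd (g' v)))"
    by (rule frechet_derivative_at[symmetric]) (auto intro!: derivative_eq_intros df dg)
  show ?thesis using cf cg
    by (simp add: CF_def dzbar1_def dz2_def dzbar2_def dz1_def e1 e2 e3 e4 e5 e6 field_simps)
      (auto simp: complex_eq_iff)
qed

lemma real_deriv:
  assumes o: "open V" and p: "p \<in> V" and df: "(f has_derivative f') (at p)"
    and r: "\<And>q. q \<in> V \<Longrightarrow> Im (fst (f q)) = 0 \<and> Im (snd (f q)) = 0"
  shows "Im (fst (f' v)) = 0 \<and> Im (snd (f' v)) = 0"
proof -
  have h: "((\<lambda>q. (cnj (fst (f q)), cnj (snd (f q)))) has_derivative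
      (\<lambda>v. (cnj (fst (f' v)), cnj (snd (f' v))))) (at p)"
    by (auto intro!: derivative_eq_intros df)
  have "((\<lambda>q. (cnj (fst (f q)), cnj (snd (f q)))) has_derivative f') (at p)"
  proof (rule has_derivative_transform_within_open[OF df o p])
    fix q assume "q \<in> V"
    then show "f q = (cnj (fst (f q)), cnj (snd (f q)))"
      using r[of q] by (simp add: complex_eq_iff prod_eq_iff)
  qed
  then have "f' = (\<lambda>v. (cnj (fst (f' v)), cnj (snd (f' v))))"
    using h has_derivative_unique by blast
  then have "f' v = (cnj (fst (f' v)), cnj (snd (f' v)))" by metis
  then show ?thesis by (simp add: complex_eq_iff prod_eq_iff)
qed

lemma bb_qmult: "bounded_bilinear qmult"
proof
  fix a a' b b' :: quat and r :: real
  show "qmult (a + a') b = qmult a b + qmult a' b"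
    by (simp add: qmult_def algebra_simps)
  show "qmult a (b + b') = qmult a b + qmult a b'"
    by (simp add: qmult_def algebra_simps)
  show "qmult (r *\<^sub>R a) b = r *\<^sub>R qmult a b"
    by (simp add: qmult_def scaleR_conv_of_real algebra_simps)
  show "qmult a (r *\<^sub>R b) = r *\<^sub>R qmult a b"
    by (simp add: qmult_def scaleR_conv_of_real algebra_simps)
next
  show "\<exists>K. \<forall>a b. norm (qmult a b) \<le> norm a * norm b * K"
  proof (intro exI allI)
    fix a b :: quat
    obtain a1 a2 where a: "a = (a1, a2)" by (cases a)
    obtain b1 b2 where b: "b = (b1, b2)" by (cases b)
    have n1: "norm a1 \<le> norm a" "norm a2 \<le> norm a" "norm b1 \<le> norm b" "norm b2 \<le> norm b"
      using a b norm_fst_le norm_snd_le by metis+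
    have "norm (qmult a b) \<le> norm (a1 * b1 - a2 * cnj b2) + norm (a1 * b2 + a2 * cnj b1)"
      using a b by (simp add: qmult_def norm_Pair_le)
    also have "\<dots> \<le> (norm a1 * norm b1 + norm a2 * norm b2) + (norm a1 * norm b2 + norm a2 * norm b1)"
      by (intro add_mono) (auto intro!: order_trans[OF norm_triangle_ineq4] order_trans[OF norm_triangle_ineq]
            simp: norm_mult)
    also have "\<dots> \<le> norm a * norm b * 4"
    proof -
      have "norm a1 * norm b1 \<le> norm a * norm b" "norm a2 * norm b2 \<le> norm a * norm b"
           "norm a1 * norm b2 \<le> norm a * norm b" "norm a2 * norm b1 \<le> norm a * norm b"
        using n1 by (auto intro!: mult_mono)
      then show ?thesis by linarith
    qed
    finally show "norm (qmult a b) \<le> norm a * norm b * 4" .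
  qed
qed

lemma smooth_const:
  assumes "open S" shows "smooth_on S (\<lambda>_. c)"
proof (rule smooth_on.coinduct[where X="\<lambda>T h. T = S \<and> (\<exists>c. h = (\<lambda>_. c))"])
  show "S = S \<and> (\<exists>c'. (\<lambda>_. c) = (\<lambda>_. c'))" by blast
next
  fix T :: "'a set" and h :: "'a \<Rightarrow> 'b"
  assume "T = S \<and> (\<exists>c. h = (\<lambda>_. c))"
  then show "\<exists>S' f. T = S' \<and> h = f \<and> open S' \<and> continuous_on S' f \<and>
            (\<forall>x\<in>S'. f differentiable at x) \<and>
            (\<forall>v. (S' = S \<and> (\<exists>c. (\<lambda>x. frechet_derivative f (at x) v) = (\<lambda>_. c))) \<or>
                 smooth_on S' (\<lambda>x. frechet_derivative f (at x) v))"
    using assms by auto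
qed

lemma smooth_restrict:
  assumes "smooth_on V f" "open T" "T \<subseteq> V" shows "smooth_on T f"
proof (rule smooth_on.coinduct[where X="\<lambda>T' h. T' = T \<and> (\<exists>V. smooth_on V h \<and> T \<subseteq> V)"])
  show "T = T \<and> (\<exists>V. smooth_on V f \<and> T \<subseteq> V)" using assms by blast
next
  fix T' :: "'a set" and h :: "'a \<Rightarrow> 'b"
  assume "T' = T \<and> (\<exists>V. smooth_on V h \<and> T \<subseteq> V)"
  then obtain V where T: "T' = T" and sh: "smooth_on V h" and TV: "T \<subseteq> V" by blast
  from smooth_onD[OF sh] have c: "continuous_on V h"
    and d: "\<forall>x\<in>V. h differentiable (at x)"
    and s: "\<forall>v. smooth_on V (\<lambda>x. frechet_derivative h (at x) v)"
    by blast+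
  have X: "T = T \<and> (\<exists>V. smooth_on V (\<lambda>x. frechet_derivative h (at x) v) \<and> T \<subseteq> V)" for v
    using s TV by blast
  show "\<exists>S' f'. T' = S' \<and> h = f' \<and> open S' \<and> continuous_on S' f' \<and>
            (\<forall>x\<in>S'. f' differentiable at x) \<and>
            (\<forall>v. (S' = T \<and> (\<exists>V. smooth_on V (\<lambda>x. frechet_derivative f' (at x) v) \<and> T \<subseteq> V)) \<or>
                 smooth_on S' (\<lambda>x. frechet_derivative f' (at x) v))"
    apply (rule exI[of _ T], rule exI[of _ h])
    using T assms(2) continuous_on_subset[OF c TV] d TV X by auto
qed

lemma H_R_iff: "(V, f) \<in> H_R U \<longleftrightarrow> open V \<and> V \<subseteq> U \<and> negligible (U - V) \<and> smooth_on V f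
   \<and> (\<forall>p\<in>V. CF f p = (0,0)) \<and> (\<forall>p\<in>V. Im (fst (f p)) = 0 \<and> Im (snd (f p)) = 0)"
  by (auto simp: H_R_def ae_hyperholomorphic_def complex_is_Real_iff)

lemma H_R_const:
  assumes "open U" "Im a = 0" "Im b = 0"
  shows "(U, (\<lambda>_. (a, b))) \<in> H_R U"
  using assms by (auto simp: H_R_iff smooth_const CF_def dzbar1_def dz2_def dzbar2_def dz1_def)

lemma smooth_diff:
  assumes "smooth_on V f" "p \<in> V" shows "(f has_derivative frechet_derivative f (at p)) (at p)"
  using smooth_onD[OF assms(1)] assms(2) by (simp add: frechet_derivative_works)

lemma H_R_mult:
  assumes F: "(V, f) \<in> H_R U" and G: "(W, g) \<in> H_R U"
  shows "(V \<inter> W, (\<lambda>p. qmult (f p) (g p))) \<in> H_R U"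
proof -
  from F have oV: "open V" and VU: "V \<subseteq> U" and nV: "negligible (U - V)" and sV: "smooth_on V f"
    and cV: "\<forall>p\<in>V. CF f p = (0,0)" and rV: "\<forall>p\<in>V. Im (fst (f p)) = 0 \<and> Im (snd (f p)) = 0"
    by (auto simp: H_R_iff)
  from G have oW: "open W" and WU: "W \<subseteq> U" and nW: "negligible (U - W)" and sW: "smooth_on W g"
    and cW: "\<forall>p\<in>W. CF g p = (0,0)" and rW: "\<forall>p\<in>W. Im (fst (g p)) = 0 \<and> Im (snd (g p)) = 0"
    by (auto simp: H_R_iff)
  have o: "open (V \<inter> W)" using oV oW by auto
  have n: "negligible (U - V \<inter> W)"
    by (rule negligible_subset[OF negligible_Un[OF nV nW]]) auto
  have s: "smooth_on (V \<inter> W) (\<lambda>p. qmult (f p) (g p))"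
    by (rule GS_smooth[OF bb_qmult GS.mul]) (use smooth_restrict sV sW o in auto)
  have c: "CF (\<lambda>q. qmult (f q) (g q)) p = (0,0)" if p: "p \<in> V \<inter> W" for p
  proof (rule CF_prod_core[OF smooth_diff[OF sV] smooth_diff[OF sW]])
    show "p \<in> V" "p \<in> W" using p by auto
    show "Im (fst (f p)) = 0" "Im (snd (f p)) = 0" "Im (fst (g p)) = 0" "Im (snd (g p)) = 0"
      using p rV rW by auto
    show "Im (fst (frechet_derivative f (at p) v)) = 0 \<and> Im (snd (frechet_derivative f (at p) v)) = 0" for v
      using real_deriv[OF oV _ smooth_diff[OF sV]] p rV by auto
    show "Im (fst (frechet_derivative g (at p) v)) = 0 \<and> Im (snd (frechet_derivative g (at p) v)) = 0" for v
      using real_deriv[OF oW _ smooth_diff[OF sW]] p rW by auto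
    show "CF f p = (0,0)" "CF g p = (0,0)" using p cV cW by auto
  qed
  have r: "Im (fst (qmult (f p) (g p))) = 0 \<and> Im (snd (qmult (f p) (g p))) = 0" if "p \<in> V \<inter> W" for p
    using that rV rW by (auto simp: qmult_def)
  show ?thesis using o VU n s c r by (auto simp: H_R_iff)
qed

lemma H_R_add:
  assumes F: "(V, f) \<in> H_R U" and G: "(W, g) \<in> H_R U"
  shows "(V \<inter> W, (\<lambda>p. f p + g p)) \<in> H_R U"
proof -
  from F have oV: "open V" and VU: "V \<subseteq> U" and nV: "negligible (U - V)" and sV: "smooth_on V f"
    and cV: "\<forall>p\<in>V. CF f p = (0,0)" and rV: "\<forall>p\<in>V. Im (fst (f p)) = 0 \<and> Im (snd (f p)) = 0"
    by (auto simp: H_R_iff)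
  from G have oW: "open W" and WU: "W \<subseteq> U" and nW: "negligible (U - W)" and sW: "smooth_on W g"
    and cW: "\<forall>p\<in>W. CF g p = (0,0)" and rW: "\<forall>p\<in>W. Im (fst (g p)) = 0 \<and> Im (snd (g p)) = 0"
    by (auto simp: H_R_iff)
  have o: "open (V \<inter> W)" using oV oW by auto
  have n: "negligible (U - V \<inter> W)"
    by (rule negligible_subset[OF negligible_Un[OF nV nW]]) auto
  have s: "smooth_on (V \<inter> W) (\<lambda>p. f p + g p)"
    by (rule GS_smooth[OF bb_qmult GS.add[OF GS.base GS.base]]) (use smooth_restrict sV sW o in auto)
  have c: "CF (\<lambda>q. f q + g q) p = (0,0)" if p: "p \<in> V \<inter> W" for p
    by (rule CF_add_core[OF smooth_diff[OF sV] smooth_diff[OF sW]]) (use p cV cW in auto)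
  have r: "Im (fst (f p + g p)) = 0 \<and> Im (snd (f p + g p)) = 0" if "p \<in> V \<inter> W" for p
    using that rV rW by auto
  show ?thesis using o VU n s c r by (auto simp: H_R_iff)
qed

theorem corollary2p3:
  fixes U :: "(complex \<times> complex) set"
  assumes "open U"
  shows "(U, (\<lambda>_. (0, 0))) \<in> H_R U
    \<and> (\<forall>(V, f) \<in> H_R U. \<forall>(W, g) \<in> H_R U.
          (V \<inter> W, (\<lambda>p. f p + g p)) \<in> H_R U \<and>
          (V \<inter> W, (\<lambda>p. qmult (f p) (g p))) \<in> H_R U)
    \<and> (\<forall>(V, f) \<in> H_R U. \<forall>c::real. (V, (\<lambda>p. qmult (f p) (complex_of_real c, 0))) \<in> H_R U)"
proof (intro conjI ballI allI)
  show "(U, (\<lambda>_. (0, 0))) \<in> H_R U" using H_R_const[OF assms, of 0 0] by simp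
next
  fix x y assume "x \<in> H_R U" "y \<in> H_R U"
  then show "case x of (V, f) \<Rightarrow> \<forall>(W, g) \<in> H_R U.
          (V \<inter> W, (\<lambda>p. f p + g p)) \<in> H_R U \<and>
          (V \<inter> W, (\<lambda>p. qmult (f p) (g p))) \<in> H_R U"
    using H_R_add H_R_mult by auto
next
  fix x c assume x: "x \<in> H_R U"
  obtain V f where xv: "x = (V, f)" by (cases x)
  have "V \<subseteq> U" using x xv by (simp add: H_R_iff)
  then have "V \<inter> U = V" by auto
  then show "case x of (V, f) \<Rightarrow> \<forall>c::real. (V, (\<lambda>p. qmult (f p) (complex_of_real c, 0))) \<in> H_R U"
    using H_R_mult[OF x[unfolded xv] H_R_const[OF assms, of "complex_of_real _" 0]] xv by auto
qed

end
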